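(* Let $q\ge5$, $\mu\in\mathbb{F}_q\setminus\{0,1\}$, and let $\ell_\mu$ be the line through $\mathbf{P}(0,\mu,0,1)$ and $\mathbf{P}(1,0,1,0)$. Then $\ell_\mu$ is an $\mathcal{E}_{nG}$-line in each of the following cases: (i) $q$ is even; (ii) $q\equiv0\pmod3$; (iii) $q\not\equiv0\pmod3$, $q$ is odd and $\mu\ne1/9$.
   Context: Points of $\mathrm{PG}(3,q)$ are written $\mathbf{P}(x_0,x_1,x_2,x_3)$ over $\mathbb{F}_q$. For $t$ in $\mathbb{F}_q$ or $\mathbb{F}_{q^2}$ put $P(t)=\mathbf{P}(t^3,t^2,t,1)$, $P(\infty)=\mathbf{P}(1,0,0,0)$; the twisted cubic is $\mathscr{C}=\{P(t):t\in\mathbb{F}_q\cup\{\infty\}\}$. The osculating plane $\pi_{osc}(t)$ is $x_0-3tx_1+3t^2x_2-t^3x_3=0$ for finite $t$ and $\pi_{osc}(\infty)$ is $x_3=0$. An imaginary chord is a line of $\mathrm{PG}(3,q)$ joining $P(t_1),P(t_2)$ with $t_1,t_2=t_1^q\in\mathbb{F}_{q^2}\setminus\mathbb{F}_q$; an imaginary axis is a line of $\mathrm{PG}(3,q)$ equal to $\pi_{osc}(t_1)\cap\pi_{osc}(t_2)$ with $t_1,t_2=t_1^q\in\mathbb{F}_{q^2}\setminus\mathbb{F}_q$. An $\mathcal{E}_{nG}$-line is a line of $\mathrm{PG}(3,q)$ with no point on $\mathscr{C}$, not contained in any $\pi_{osc}(t)$, $t\in\mathbb{F}_q\cup\{\infty\}$,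 and which is neither an imaginary chord nor an imaginary axis. *)

theory Defs
  imports Main "HOL-Library.Cardinality"
begin

type_synonym 'a pt4 = "'a \<times> 'a \<times> 'a \<times> 'a"

definition comb4 :: "'a::field \<Rightarrow> 'a pt4 \<Rightarrow> 'a \<Rightarrow> 'a pt4 \<Rightarrow> 'a pt4" where
  "comb4 a u b v = (case u of (u0,u1,u2,u3) \<Rightarrow> case v of (v0,v1,v2,v3) \<Rightarrow>
     (a*u0 + b*v0, a*u1 + b*v1, a*u2 + b*v2, a*u3 + b*v3))"

text \<open>The 2-dimensional subspace spanned by u and v; its nonzero vectors are the
  (representatives of the) points of the projective line joining P(u) and P(v).\<close>
definition span2 :: "'a::field pt4 \<Rightarrow> 'a pt4 \<Rightarrow> 'a pt4 set" where
  "span2 u v = {comb4 a u b v | a b. True}"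

definition map4 :: "('a \<Rightarrow> 'b) \<Rightarrow> 'a pt4 \<Rightarrow> 'b pt4" where
  "map4 f x = (case x of (x0,x1,x2,x3) \<Rightarrow> (f x0, f x1, f x2, f x3))"

definition cubP :: "'a::field \<Rightarrow> 'a pt4" where
  "cubP t = (t^3, t^2, t, 1)"

definition cubP_inf :: "'a::field pt4" where
  "cubP_inf = (1, 0, 0, 0)"

definition osc :: "'a::field \<Rightarrow> 'a pt4 set" where
  "osc t = {(x0,x1,x2,x3). x0 - 3*t*x1 + 3*t^2*x2 - t^3*x3 = 0}"

definition osc_inf :: "'a::field pt4 set" where
  "osc_inf = {(x0,x1,x2,x3). x3 = 0}"

text \<open>E_nG-line property for the line of PG(3,q) spanned by the independent vectors
  u, v over F_q = 'a, where emb : F_q \<rightarrow> F_{q^2} = 'b is the field embedding.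
  A point of F_{q^2}\F_q is an element outside the image of emb; its conjugate is t^q.\<close>
definition EnG_line :: "('a::{field,finite} \<Rightarrow> 'b::field) \<Rightarrow> 'a pt4 \<Rightarrow> 'a pt4 \<Rightarrow> bool" where
  "EnG_line emb u v \<longleftrightarrow>
     (\<forall>t. cubP t \<notin> span2 u v) \<and> cubP_inf \<notin> span2 u v \<and>
     (\<forall>t. \<not> span2 u v \<subseteq> osc t) \<and> \<not> span2 u v \<subseteq> osc_inf \<and>
     \<not> (\<exists>t. t \<notin> range emb \<and>
          span2 (map4 emb u) (map4 emb v) = span2 (cubP t) (cubP (t ^ CARD('a)))) \<and>
     \<not> (\<exists>t. t \<notin> range emb \<and>
          span2 (map4 emb u) (map4 emb v) = osc t \<inter> osc (t ^ CARD('a)))"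

end

theory Submission
  imports Defs "HOL-Algebra.Sylow"
begin

lemma prime_char_from_card:
  fixes r :: nat
  assumes p: "prime r" and r: "r = 2 \<or> r = 3" and dv: "r dvd CARD('a::{field,finite})"
  shows "(of_nat r :: 'a) = 0"
proof -
  define G where "G = \<lparr>carrier = (UNIV :: 'a set), monoid.mult = (+), one = (0::'a)\<rparr>"
  have grp: "group G"
    unfolding G_def
    apply (rule groupI)
        apply (simp_all add: add.assoc)
    using add.left_inverse by blast
  have ord: "order G = r ^ 1 * (CARD('a) div r)"
    using dv by (simp add: order_def G_def)
  obtain H where H: "subgroup H G" "card H = r ^ 1"
    using sylow_thm[OF p grp ord] by (auto simp: G_def)
  have cl: "\<And>x y. x \<in> H \<Longrightarrow> y \<in> H \<Longrightarrow> x + y \<in> H"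
    using subgroup.m_closed[OF H(1)] by (simp add: G_def)
  have z: "0 \<in> H" using subgroup.one_closed[OF H(1)] by (simp add: G_def)
  show ?thesis
    using r
  proof
    assume r2: "r = 2"
    then obtain a b where ab: "H = {a, b}" "a \<noteq> b" using H(2) by (auto simp: card_2_iff)
    then obtain x where x: "x \<in> H" "x \<noteq> 0" by blast
    have Hx: "H = {0, x}" using ab x z by blast
    have "x + x \<in> {0, x}" using cl[OF x(1) x(1)] Hx by blast
    moreover have "x + x \<noteq> x" using x(2) by (simp only: add_cancel_left_right not_False_eq_True)
    ultimately have "x + x = 0" by blast
    then have "2 * x = 0" by (simp only: mult_2)
    then have "(2::'a) = 0" using x(2) by simp
    then show ?thesis using r2 by simp
  next
    assume r3: "r = 3"
    then obtain a b c where abc: "H = {a, b, c}" "a \<noteq> b" "a \<noteq> c" "b \<noteq> c"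
      using H(2) by (auto simp: card_3_iff)
    have "\<exists>x y. H = {0, x, y} \<and> x \<noteq> 0 \<and> y \<noteq> 0 \<and> x \<noteq> y"
    proof -
      have "a = 0 \<or> b = 0 \<or> c = 0" using z abc(1) by blast
      moreover have ?thesis if "a = 0" using that abc by blast
      moreover have ?thesis if "b = 0"
        apply (rule exI[of _ a], rule exI[of _ c]) using that abc by blast
      moreover have ?thesis if "c = 0"
        apply (rule exI[of _ a], rule exI[of _ b]) using that abc by blast
      ultimately show ?thesis by blast
    qed
    then obtain x y where xy: "H = {0, x, y}" "x \<noteq> 0" "y \<noteq> 0" "x \<noteq> y" by blast
    have xH: "x \<in> H" and yH: "y \<in> H" using xy by blast+
    have "x + y \<in> {0, x, y}" using cl[OF xH yH] xy(1) by blast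
    moreover have "x + y \<noteq> x" using xy(3) by (simp only: add_cancel_left_right not_False_eq_True)
    moreover have "x + y \<noteq> y" using xy(2) by (simp only: add_cancel_right_right add.commute[of x y] add_cancel_left_right not_False_eq_True)
    ultimately have "x + y = 0" by blast
    then have yx: "y = - x" by (metis add.commute add_eq_0_iff)
    have "x + x \<in> {0, x, y}" using cl[OF xH xH] xy(1) by blast
    moreover have "x + x \<noteq> x" using xy(2) by (simp only: add_cancel_left_right not_False_eq_True)
    moreover have "x + x \<noteq> 0"
    proof
      assume "x + x = 0"
      then have "x = - x" by (metis add_eq_0_iff)
      then show False using xy(4) yx by simp
    qed
    ultimately have "x + x = - x" using yx by blast
    then have "x + x + x = - x + x" by (simp only:)
    then have "x + x + x = 0" by (simp only: add.left_inverse)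
    moreover have "3 * x = x + x + x"
    proof -
      have "(3::'a) = 1 + 1 + 1" by simp
      then have "3 * x = (1 + 1 + 1) * x" by (simp only:)
      then show ?thesis by (simp only: distrib_right mult_1_left)
    qed
    ultimately have "3 * x = 0" by (simp only:)
    then have "(3::'a) = 0" using xy(2) by simp
    then show ?thesis using r3 by simp
  qed
qed

lemma osc_alg:
  fixes t m :: "'a::field"
  assumes h1: "1 + 3 * t^2 = 0" and h2: "3 * t * m + t^3 = 0"
  shows "((2::'a) = 0 \<and> t = 1 \<and> m = 1) \<or> ((2::'a) \<noteq> 0 \<and> (3::'a) \<noteq> 0 \<and> 9 * m = 1)"
proof (cases "(2::'a) = 0")
  case True
  have e3: "(3::'a) = 1" using True by (metis add_0 numeral_3_eq_3 one_add_one add.commute Suc_eq_plus1 of_nat_1 of_nat_add of_nat_numeral)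
  have "(t + 1)^2 = 1 + t^2 + 2 * t" by (simp add: power2_eq_square algebra_simps)
  also have "\<dots> = 0" using h1 e3 True by simp
  finally have "t + 1 = 0" by simp
  then have t1: "t = 1" using True by (metis add.commute add_diff_cancel_left' diff_0 minus_equation_iff one_add_one eq_neg_iff_add_eq_0)
  have "m + 1 = 0" using h2 t1 e3 by simp
  then have "m = 1" using True by (metis add.commute add_diff_cancel_left' diff_0 minus_equation_iff one_add_one eq_neg_iff_add_eq_0)
  then show ?thesis using True t1 by simp
next
  case False
  have n3: "(3::'a) \<noteq> 0" using h1 by (auto)
  have t0: "t \<noteq> 0" using h1 by auto
  have "t * (3 * m + t^2) = 0" using h2 by (simp add: algebra_simps power3_eq_cube power2_eq_square)
  then have "3 * m + t^2 = 0" using t0 by simp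
  then have s: "3 * m = - (t^2)" by (simp add: eq_neg_iff_add_eq_0)
  have "9 * m = 3 * (3 * m)" by simp
  also have "\<dots> = - (3 * t^2)" using s by simp
  also have "\<dots> = 1" using h1 by (metis add.commute add_eq_0_iff minus_minus)
  finally have "9 * m = 1" .
  then show ?thesis using False n3 by simp
qed

lemma cube_roots:
  fixes t :: "'b::field" assumes "t^3 = t" shows "t = 0 \<or> t = 1 \<or> t = -1"
proof -
  have "t * (t - 1) * (t + 1) = t^3 - t" by (simp add: algebra_simps power3_eq_cube)
  then have "t * (t - 1) * (t + 1) = 0" using assms by simp
  then show ?thesis by (auto simp: eq_neg_iff_add_eq_0)
qed

theorem lemma4p4:
  fixes emb :: "'a::{field,finite} \<Rightarrow> 'b::{field,finite}" and \<mu> :: 'a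
  assumes q5: "CARD('a) \<ge> 5"
    and ext: "CARD('b) = CARD('a) ^ 2"
    and hom_add: "\<And>x y. emb (x + y) = emb x + emb y"
    and hom_mult: "\<And>x y. emb (x * y) = emb x * emb y"
    and hom_one: "emb 1 = 1"
    and mu: "\<mu> \<noteq> 0" "\<mu> \<noteq> 1"
    and cases: "even (CARD('a)) \<or> 3 dvd CARD('a) \<or>
                (\<not> 3 dvd CARD('a) \<and> odd (CARD('a)) \<and> \<mu> \<noteq> 1 / 9)"
  shows "EnG_line emb (0, \<mu>, 0, 1) (1, 0, 1, 0)"
proof -
  have e00: "emb 0 = emb 0 + emb 0" using hom_add[of 0 0] by (metis add_0)
  then have e0: "emb 0 = 0" by (metis add_cancel_right_right)
  have eneg: "emb (- x) = - emb x" for x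
  proof -
    have "0 = emb x + emb (-x)" using hom_add[of x "-x"] e0 by (metis add.right_inverse)
    then show ?thesis by (metis add.commute add_eq_0_iff)
  qed
  have einj: "emb x = emb y \<Longrightarrow> x = y" for x y
  proof (rule ccontr)
    assume "emb x = emb y" "x \<noteq> y"
    then have "emb (x - y) = 0" using hom_add[of x "-y"] eneg[of y] by simp
    then have "emb ((x - y) * inverse (x - y)) = 0" using hom_mult by simp
    then show False using \<open>x \<noteq> y\<close> hom_one by simp
  qed
  have e2: "emb 2 = 2" using hom_add[of 1 1] hom_one by simp
  have e3: "emb 3 = 3" using hom_add[of 2 1] hom_one e2 by simp
  have e9: "emb 9 = 9" using hom_mult[of 3 3] e3 by simp
  have sp: "span2 (u0,u1,u2,u3) (v0,v1,v2,v3) = {(a*u0+b*v0, a*u1+b*v1, a*u2+b*v2, a*u3+b*v3) | a b. True}"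
    for u0 u1 u2 u3 v0 v1 v2 v3 :: "'c::field"
    by (simp add: span2_def comb4_def)
  have sub: "(0, m, 0, 1) \<in> S \<and> (1, 0, 1, 0) \<in> S"
    if "span2 (0, m, 0, 1) (1, 0, 1, 0) \<subseteq> S" for m :: "'c::field" and S
  proof -
    have "(0, m, 0, 1) \<in> span2 (0, m, 0, 1) (1, 0, 1, 0)" unfolding sp by force
    moreover have "(1, 0, 1, 0) \<in> span2 (0, m, 0, 1) (1, 0, 1, 0)" unfolding sp by force
    ultimately show ?thesis using that by blast
  qed
  have oscm: "1 + 3 * t^2 = 0 \<and> 3 * t * m + t^3 = 0"
    if "span2 (0, m, 0, 1) (1, 0, 1, 0) \<subseteq> osc t" for m t :: "'c::field"
  proof -
    from sub[OF that] have A: "- 3*t*m - t^3 = 0" "1 + 3*t^2 = 0" by (auto simp: osc_def)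
    have "3*t*m + t^3 = - (- 3*t*m - t^3)" by (simp add: algebra_simps)
    then show ?thesis using A by (metis minus_zero)
  qed
  have c2: "(2::'a) = 0" if "even (CARD('a))"
    using prime_char_from_card[of 2] that by simp
  have c3: "(3::'a) = 0" if "3 dvd (CARD('a))"
    using prime_char_from_card[of 3] that by simp
  have mu9: "9 * \<mu> \<noteq> 1 \<or> (2::'a) = 0 \<or> (3::'a) = 0"
  proof -
    { assume "9 * \<mu> = 1" "(3::'a) \<noteq> 0"
      then have n9: "(9::'a) \<noteq> 0" using \<open>9 * \<mu> = 1\<close> by auto
      then have "\<mu> = 1 / 9" using \<open>9 * \<mu> = 1\<close> by (simp add: eq_divide_eq mult.commute)
      then have "even (CARD('a)) \<or> 3 dvd CARD('a)" using cases by blast }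
    then show ?thesis using c2 c3 by blast
  qed
  have emu: "map4 emb (0, \<mu>, 0, 1) = (0, emb \<mu>, 0, 1)" "map4 emb (1, 0, 1, 0) = (1, 0, 1, 0)"
    by (auto simp: map4_def e0 hom_one)
  show ?thesis
    unfolding EnG_line_def emu
  proof (intro conjI allI notI)
    fix t :: 'a
    assume "cubP t \<in> span2 (0, \<mu>, 0, 1) (1, 0, 1, 0)"
    then have "t^3 = t" "t^2 = \<mu>" by (auto simp: sp cubP_def)
    from this(1) have "t = 0 \<or> t = 1 \<or> t = -1" by (rule cube_roots)
    then show False using \<open>t^2 = \<mu>\<close> mu by auto
  next
    assume "cubP_inf \<in> span2 (0, \<mu>, 0, 1) (1, 0, 1, 0)"
    then show False by (auto simp: sp cubP_inf_def)
  next
    fix t :: 'a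
    assume "span2 (0, \<mu>, 0, 1) (1, 0, 1, 0) \<subseteq> osc t"
    from osc_alg[OF conjunct1[OF oscm[OF this]] conjunct2[OF oscm[OF this]]]
    show False using mu mu9 by auto
  next
    assume "span2 (0, \<mu>, 0, 1) (1, 0, 1, 0) \<subseteq> osc_inf"
    from sub[OF this] show False by (auto simp: osc_inf_def)
  next
    assume "\<exists>t. t \<notin> range emb \<and> span2 (0, emb \<mu>, 0, 1) (1, 0, 1, 0) = span2 (cubP t) (cubP (t ^ CARD('a)))"
    then obtain t where t: "t \<notin> range emb" and eq: "span2 (0, emb \<mu>, 0, 1) (1, 0, 1, 0) = span2 (cubP t) (cubP (t ^ CARD('a)))" by blast
    have "cubP t = comb4 1 (cubP t) 0 (cubP (t ^ CARD('a)))"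
      by (simp add: comb4_def cubP_def)
    then have "cubP t \<in> span2 (cubP t) (cubP (t ^ CARD('a)))"
      unfolding span2_def by blast
    then have "cubP t \<in> span2 (0, emb \<mu>, 0, 1) (1, 0, 1, 0)" by (simp only: eq)
    then have "t^3 = t" by (auto simp: sp cubP_def)
    then have "t = 0 \<or> t = 1 \<or> t = -1" by (rule cube_roots)
    moreover have "0 \<in> range emb" using rangeI[of emb 0] e0 by simp
    moreover have "1 \<in> range emb" using rangeI[of emb 1] hom_one by simp
    moreover have "-1 \<in> range emb" using rangeI[of emb "-1"] eneg[of 1] hom_one by simp
    ultimately show False using t by auto
  next
    assume "\<exists>t. t \<notin> range emb \<and> span2 (0, emb \<mu>, 0, 1) (1, 0, 1, 0) = osc t \<inter> osc (t ^ CARD('a))"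
    then obtain t where t: "t \<notin> range emb" and eq: "span2 (0, emb \<mu>, 0, 1) (1, 0, 1, 0) = osc t \<inter> osc (t ^ CARD('a))" by blast
    then have "span2 (0, emb \<mu>, 0, 1) (1, 0, 1, 0) \<subseteq> osc t" by simp
    from osc_alg[OF conjunct1[OF oscm[OF this]] conjunct2[OF oscm[OF this]]]
    have "((2::'b) = 0 \<and> t = 1 \<and> emb \<mu> = 1) \<or> ((2::'b) \<noteq> 0 \<and> (3::'b) \<noteq> 0 \<and> 9 * emb \<mu> = 1)" .
    moreover have "t \<noteq> 1" using t hom_one rangeI[of emb 1] by auto
    ultimately have "(2::'b) \<noteq> 0" "(3::'b) \<noteq> 0" "9 * emb \<mu> = 1" by auto
    then have "(2::'a) \<noteq> 0" "(3::'a) \<noteq> 0" "emb (9 * \<mu>) = emb 1"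
      using e2 e3 e0 apply (metis, metis)
      using hom_mult[of 9 \<mu>] e9 hom_one \<open>9 * emb \<mu> = 1\<close> by simp
    then show False using mu9 einj by blast
  qed
qed

end
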